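(* Let $G$ be a compact, connected, simply connected simple Lie group with maximal torus $T$, $\mathfrak{h}=\mathrm{Lie}(T)$, simple roots $\Delta=\{a_1,\ldots,a_n\}$, highest root $d$, $\tilde a=-d$, and extended simple roots $\tilde\Delta=\{\tilde a,a_1,\ldots,a_n\}$. Let $g_1,\ldots,g_n$ be the positive integers with $\tilde a^\vee+\sum_{j=1}^n g_j a_j^\vee=0$ (the coroot integers). Let $x=\exp(\tilde x)\in T$ with $\tilde x$ in the closed fundamental alcove $A=\{\xi\in\mathfrak{h}: a_j(\xi)\ge 0\ \forall j,\ d(\xi)\le 1\}$, and suppose that (after renumbering the $a_j$) the set of extended simple roots whose walls contain $\tilde x$ (the simple roots of $Z_G(x)$) is $\Delta_x=\{\tilde a,a_1,\ldots,a_k\}$ with $k<n$. Let $Q^\vee(x)\subseteq Q^\vee$ be the $\mathbb{Z}$-span of the coroots $\tilde a^\vee,a_1^\vee,\ldots,a_k^\vee$ and $\mathfrak{h}(x)\subseteq\mathfrak{h}$ their real linear span. Then, with $N=\gcd(g_{k+1},\ldots,g_n)$, there is an exact sequence $$1\to Q^\vee(x)\to Q^\vee\cap\mathfrak{h}(x)\to\mathbb{Z}/N\mathbb{Z}\to 1.$$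
   Context: $Q^\vee=\sum_j\mathbb{Z}a_j^\vee$ is the coroot lattice, and $\exp:\mathfrak{h}\to T$ is normalized so that its kernel is $Q^\vee$. The wall of $\tilde a$ is $\{\xi: d(\xi)=1\}$ and the wall of $a_j$ is $\{\xi: a_j(\xi)=0\}$. The first map is the inclusion. *)

theory Defs
  imports "HOL-Analysis.Analysis"
begin

text \<open>We identify \<open>\<frak>h\<close> with its dual via the inner product of a euclidean space 'a,
so a root \<open>\<alpha>\<close> is a vector and \<open>\<alpha>(\<xi>) = \<alpha> \<bullet> \<xi>\<close>; the coroot is \<open>2\<alpha>/<\<alpha>,\<alpha>>\<close>.\<close>

definition coroot :: "'a::euclidean_space \<Rightarrow> 'a" where
  "coroot \<alpha> = (2 / (\<alpha> \<bullet> \<alpha>)) *\<^sub>R \<alpha>"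

definition zspan :: "'a::real_vector set \<Rightarrow> 'a set" where
  "zspan S = {(\<Sum>v\<in>F. of_int (c v) *\<^sub>R v) | F c. finite F \<and> F \<subseteq> S}"

definition root_system :: "'a::euclidean_space set \<Rightarrow> bool" where
  "root_system R \<longleftrightarrow> finite R \<and> 0 \<notin> R \<and> span R = UNIV \<and>
     (\<forall>\<alpha>\<in>R. \<forall>\<beta>\<in>R. \<beta> - (2 * (\<beta> \<bullet> \<alpha>) / (\<alpha> \<bullet> \<alpha>)) *\<^sub>R \<alpha> \<in> R) \<and>
     (\<forall>\<alpha>\<in>R. \<forall>\<beta>\<in>R. 2 * (\<beta> \<bullet> \<alpha>) / (\<alpha> \<bullet> \<alpha>) \<in> \<int>) \<and>
     (\<forall>\<alpha>\<in>R. \<forall>c::real. c *\<^sub>R \<alpha> \<in> R \<longrightarrow> c = 1 \<or> c = -1)"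

definition irreducible_root_system :: "'a::euclidean_space set \<Rightarrow> bool" where
  "irreducible_root_system R \<longleftrightarrow> root_system R \<and>
     \<not> (\<exists>R1 R2. R = R1 \<union> R2 \<and> R1 \<noteq> {} \<and> R2 \<noteq> {} \<and>
            (\<forall>\<alpha>\<in>R1. \<forall>\<beta>\<in>R2. \<alpha> \<bullet> \<beta> = 0))"

definition simple_roots :: "'a::euclidean_space set \<Rightarrow> (nat \<Rightarrow> 'a) \<Rightarrow> nat \<Rightarrow> bool" where
  "simple_roots R a n \<longleftrightarrow> inj_on a {1..n} \<and> a ` {1..n} \<subseteq> R \<and>
     independent (a ` {1..n}) \<and> span (a ` {1..n}) = UNIV \<and>
     (\<forall>\<beta>\<in>R. \<exists>c::nat \<Rightarrow> int. \<beta> = (\<Sum>j=1..n. of_int (c j) *\<^sub>R a j) \<and>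
          ((\<forall>j\<in>{1..n}. c j \<ge> 0) \<or> (\<forall>j\<in>{1..n}. c j \<le> 0)))"

definition highest_root :: "'a::euclidean_space set \<Rightarrow> (nat \<Rightarrow> 'a) \<Rightarrow> nat \<Rightarrow> 'a \<Rightarrow> bool" where
  "highest_root R a n d \<longleftrightarrow> d \<in> R \<and>
     (\<forall>\<beta>\<in>R. \<exists>c::nat \<Rightarrow> int. (\<forall>j\<in>{1..n}. c j \<ge> 0) \<and>
          d - \<beta> = (\<Sum>j=1..n. of_int (c j) *\<^sub>R a j))"

end

theory Submission
  imports Defs
begin

lemma zspan_finite:
  assumes "finite S"
  shows "zspan S = {(\<Sum>v\<in>S. of_int (m v) *\<^sub>R v) | m. True}"
proof
  show "zspan S \<subseteq> {(\<Sum>v\<in>S. of_int (m v) *\<^sub>R v) | m. True}"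
  proof
    fix u assume "u \<in> zspan S"
    then obtain F c where u: "u = (\<Sum>v\<in>F. of_int (c v) *\<^sub>R v)" "finite F" "F \<subseteq> S"
      unfolding zspan_def by blast
    define m where "m v = (if v \<in> F then c v else 0)" for v
    have "(\<Sum>v\<in>S. of_int (m v) *\<^sub>R v) = (\<Sum>v\<in>F. of_int (m v) *\<^sub>R v)"
      by (rule sum.mono_neutral_right) (use assms u in \<open>auto simp: m_def\<close>)
    also have "\<dots> = u" using u by (simp add: m_def)
    finally show "u \<in> {(\<Sum>v\<in>S. of_int (m v) *\<^sub>R v) | m. True}" by auto
  qed
next
  show "{(\<Sum>v\<in>S. of_int (m v) *\<^sub>R v) | m. True} \<subseteq> zspan S"
    unfolding zspan_def using assms by blast
qed

lemma coord_unique: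
  fixes a :: "nat \<Rightarrow> 'a::euclidean_space"
  assumes ind: "independent (a ` B)" and inj: "inj_on a B" and fin: "finite B"
    and eq: "(\<Sum>j\<in>B. x j *\<^sub>R coroot (a j)) = (\<Sum>j\<in>B. y j *\<^sub>R coroot (a j))"
  shows "\<forall>j\<in>B. x j = y j"
proof
  fix j assume j: "j \<in> B"
  have nz: "\<forall>i\<in>B. a i \<noteq> 0" using ind real_vector.dependent_zero by (metis image_eqI)
  define w where "w i = (x i - y i) * (2 / (a i \<bullet> a i))" for i
  have "(\<Sum>i\<in>B. w i *\<^sub>R a i) = (\<Sum>j\<in>B. x j *\<^sub>R coroot (a j)) - (\<Sum>j\<in>B. y j *\<^sub>R coroot (a j))"
    unfolding sum_subtractf[symmetric] by (intro sum.cong refl) (simp add: w_def coroot_def left_diff_distrib scaleR_left_diff_distrib diff_divide_distrib)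
  also have "\<dots> = 0" using eq by simp
  finally have s0: "(\<Sum>i\<in>B. w i *\<^sub>R a i) = 0" .
  have "(\<Sum>v\<in>a ` B. w (inv_into B a v) *\<^sub>R v) = (\<Sum>i\<in>B. w i *\<^sub>R a i)"
    using inj by (simp add: sum.reindex)
  with s0 have s1: "(\<Sum>v\<in>a ` B. w (inv_into B a v) *\<^sub>R v) = 0" by simp
  have H: "\<forall>c. (\<Sum>v\<in>a ` B. c v *\<^sub>R v) = 0 \<longrightarrow> (\<forall>v\<in>a ` B. c v = 0)"
    using ind unfolding independent_explicit by blast
  have "\<forall>v\<in>a ` B. w (inv_into B a v) = 0"
    using spec[OF H, of "\<lambda>v. w (inv_into B a v)"] s1 by blast
  then have "w j = 0" using j inj by auto
  moreover have "a j \<bullet> a j \<noteq> 0" using nz j by simp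
  ultimately show "x j = y j" by (simp add: w_def)
qed

lemma gcd_int_mult:
  fixes g :: "nat \<Rightarrow> int"
  assumes "finite A" "\<forall>j\<in>A. t * of_int (g j) \<in> \<int>"
  shows "t * of_int (Gcd (g ` A)) \<in> (\<int>::real set)"
  using assms
proof (induction A rule: finite_induct)
  case empty then show ?case by simp
next
  case (insert j A)
  obtain u v where uv: "u * g j + v * Gcd (g ` A) = gcd (g j) (Gcd (g ` A))"
    using bezout_int by blast
  have "t * of_int (Gcd (g ` insert j A)) = of_int u * (t * of_int (g j)) + of_int v * (t * of_int (Gcd (g ` A)))"
    by (simp add: uv[symmetric] algebra_simps)
  also have "\<dots> \<in> \<int>" using insert by (metis Ints_add Ints_mult Ints_of_int insert_iff)
  finally show ?case .
qed

theorem mainTheorem3: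
  fixes R :: "'a::euclidean_space set" and a :: "nat \<Rightarrow> 'a" and n k :: nat
    and d \<xi> :: 'a and g :: "nat \<Rightarrow> int"
  assumes irr: "irreducible_root_system R"
    and base: "simple_roots R a n"
    and hr: "highest_root R a n d"
    and g_pos: "\<forall>j\<in>{1..n}. g j > 0"
    and g_rel: "coroot (- d) + (\<Sum>j=1..n. of_int (g j) *\<^sub>R coroot (a j)) = 0"
    and alcove: "(\<forall>j\<in>{1..n}. a j \<bullet> \<xi> \<ge> 0) \<and> d \<bullet> \<xi> \<le> 1"
    and kn: "k < n"
    and walls: "d \<bullet> \<xi> = 1 \<and> (\<forall>j\<in>{1..n}. a j \<bullet> \<xi> = 0 \<longleftrightarrow> j \<le> k)"
  shows "let Q = zspan (coroot ` a ` {1..n});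
             Qx = zspan (coroot ` ({- d} \<union> a ` {1..k}));
             hx = span (coroot ` ({- d} \<union> a ` {1..k}));
             N = Gcd (g ` {k+1..n})
         in Qx \<subseteq> Q \<inter> hx \<and>
            (\<exists>f :: 'a \<Rightarrow> int. f \<in> (Q \<inter> hx) \<rightarrow> {0..<N} \<and>
               (\<forall>u\<in>Q \<inter> hx. \<forall>v\<in>Q \<inter> hx. f (u + v) = (f u + f v) mod N) \<and>
               f ` (Q \<inter> hx) = {0..<N} \<and>
               {u \<in> Q \<inter> hx. f u = 0} = Qx)"
proof -
  define B where "B = {1..n}"
  define K where "K = {1..k}"
  define T where "T = {k+1..n}"
  define c where "c j = coroot (a j)" for j
  define e where "e = coroot (- d)"
  define lin where "lin x = (\<Sum>j\<in>B. x j *\<^sub>R c j)" for x :: "nat \<Rightarrow> real"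
  have ind: "independent (a ` B)" and inj: "inj_on a B"
    using base unfolding simple_roots_def B_def by auto
  have finB: "finite B" by (simp add: B_def)
  have KB: "K \<subseteq> B" and TB: "T \<subseteq> B" using kn by (auto simp: K_def T_def B_def)
  have nT: "n \<in> T" using kn by (simp add: T_def)
  have uniq: "\<And>x y. lin x = lin y \<Longrightarrow> \<forall>j\<in>B. x j = y j"
    using coord_unique[OF ind inj finB] by (simp add: lin_def c_def)
  have lin_add: "lin (\<lambda>j. x j + y j) = lin x + lin y" for x y
    by (simp add: lin_def scaleR_add_left sum.distrib)
  have lin_mult: "lin (\<lambda>j. r * x j) = r *\<^sub>R lin x" for r x
    by (simp add: lin_def scaleR_sum_right)
  have lin_delta: "lin (\<lambda>l. if l = i then 1 else 0) = c i" if "i \<in> B" for i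
  proof -
    have "lin (\<lambda>l. if l = i then 1 else 0) = (\<Sum>j\<in>B. if j = i then c j else 0)"
      unfolding lin_def by (intro sum.cong) auto
    then show ?thesis using that finB by simp
  qed
  have e_lin: "e = lin (\<lambda>j. - of_int (g j))"
  proof -
    have "e = - (\<Sum>j\<in>B. of_int (g j) *\<^sub>R c j)"
      using g_rel by (simp add: e_def c_def B_def eq_neg_iff_add_eq_0)
    then show ?thesis by (simp add: lin_def sum_negf)
  qed
  have lin_g: "lin (\<lambda>j. of_int (g j)) = - e"
    using e_lin lin_mult[of "-1" "\<lambda>j. - of_int (g j)"] by simp
  have injc: "inj_on c B"
  proof
    fix i j assume ij: "i \<in> B" "j \<in> B" "c i = c j"
    then have "lin (\<lambda>l. if l = i then 1 else 0) = lin (\<lambda>l. if l = j then 1 else 0)"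
      using lin_delta by simp
    from uniq[OF this] ij(1) have "(if i = i then 1 else 0) = (if i = j then 1 else (0::real))" by blast
    then show "i = j" by (simp split: if_splits)
  qed
  have decomp: "lin x = (\<Sum>j\<in>K. (x j - t * of_int (g j)) *\<^sub>R c j) - t *\<^sub>R e"
    if tail: "\<forall>j\<in>T. x j = t * of_int (g j)" for x t
  proof -
    define y where "y j = (if j \<le> k then x j - t * of_int (g j) else 0)" for j
    have "lin x = lin (\<lambda>j. y j + t * of_int (g j))"
      unfolding lin_def using tail by (intro sum.cong) (auto simp: y_def T_def B_def)
    also have "\<dots> = lin y - t *\<^sub>R e" using lin_add lin_mult lin_g by simp
    also have "lin y = (\<Sum>j\<in>K. (x j - t * of_int (g j)) *\<^sub>R c j)"
      unfolding lin_def
      by (rule sum.mono_neutral_cong_right) (use finB KB in \<open>auto simp: y_def K_def B_def\<close>)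
    finally show ?thesis .
  qed
  have Qeq: "zspan (coroot ` a ` {1..n}) = {lin (\<lambda>j. of_int (m j)) | m. True}"
  proof -
    have im: "coroot ` a ` {1..n} = c ` B" by (auto simp: c_def B_def)
    show ?thesis unfolding im zspan_finite[OF finite_imageI[OF finB]]
    proof (intro equalityI subsetI)
      fix u assume "u \<in> {\<Sum>v\<in>c ` B. real_of_int (m v) *\<^sub>R v |m. True}"
      then obtain m where "u = (\<Sum>v\<in>c ` B. real_of_int (m v) *\<^sub>R v)" by blast
      then have "u = lin (\<lambda>j. of_int (m (c j)))" using injc by (simp add: sum.reindex lin_def)
      then show "u \<in> {lin (\<lambda>j. of_int (m j)) | m. True}"
        by (intro CollectI exI[of _ "\<lambda>j. m (c j)"]) simp
    next
      fix u assume "u \<in> {lin (\<lambda>j. of_int (m j)) | m. True}"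
      then obtain m where u: "u = lin (\<lambda>j. of_int (m j))" by blast
      have "(\<Sum>v\<in>c ` B. real_of_int (m (inv_into B c v)) *\<^sub>R v) = lin (\<lambda>j. of_int (m j))"
        using injc by (simp add: sum.reindex lin_def)
      then show "u \<in> {\<Sum>v\<in>c ` B. real_of_int (m v) *\<^sub>R v |m. True}" using u
        by (intro CollectI exI[of _ "\<lambda>v. m (inv_into B c v)"]) simp
    qed
  qed
  have Sx: "coroot ` ({- d} \<union> a ` {1..k}) = insert e (c ` K)"
    by (auto simp: e_def c_def K_def)
  define H where "H = {lin x | x. \<exists>t. \<forall>j\<in>T. x j = t * of_int (g j)}"
  have hxeq: "span (insert e (c ` K)) = H"
  proof
    have sub: "subspace H" unfolding subspace_def H_def
    proof (intro conjI ballI allI)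
      show "0 \<in> {lin x |x. \<exists>t. \<forall>j\<in>T. x j = t * real_of_int (g j)}"
        by (rule CollectI, rule exI[of _ "\<lambda>j. 0"]) (auto simp: lin_def)
    next
      fix u v assume "u \<in> {lin x |x. \<exists>t. \<forall>j\<in>T. x j = t * real_of_int (g j)}"
        "v \<in> {lin x |x. \<exists>t. \<forall>j\<in>T. x j = t * real_of_int (g j)}"
      then obtain x t y s where "u = lin x" "\<forall>j\<in>T. x j = t * real_of_int (g j)"
        "v = lin y" "\<forall>j\<in>T. y j = s * real_of_int (g j)" by blast
      then have "u + v = lin (\<lambda>j. x j + y j) \<and> (\<forall>j\<in>T. x j + y j = (t + s) * real_of_int (g j))"
        using lin_add by (simp add: algebra_simps)
      then show "u + v \<in> {lin x |x. \<exists>t. \<forall>j\<in>T. x j = t * real_of_int (g j)}" by blast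
    next
      fix r :: real and u assume "u \<in> {lin x |x. \<exists>t. \<forall>j\<in>T. x j = t * real_of_int (g j)}"
      then obtain x t where "u = lin x" "\<forall>j\<in>T. x j = t * real_of_int (g j)" by blast
      then have "r *\<^sub>R u = lin (\<lambda>j. r * x j) \<and> (\<forall>j\<in>T. r * x j = (r * t) * real_of_int (g j))"
        using lin_mult by simp
      then show "r *\<^sub>R u \<in> {lin x |x. \<exists>t. \<forall>j\<in>T. x j = t * real_of_int (g j)}" by blast
    qed
    have gen: "insert e (c ` K) \<subseteq> H"
    proof
      fix v assume "v \<in> insert e (c ` K)"
      then consider "v = e" | i where "i \<in> K" "v = c i" by blast
      then show "v \<in> H"
      proof cases
        case 1 then show ?thesis unfolding H_def using e_lin
          by (intro CollectI exI[of _ "\<lambda>j. - of_int (g j)"]) (auto intro: exI[of _ "-1"])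
      next
        case 2
        then have "v = lin (\<lambda>l. if l = i then 1 else 0)" using lin_delta KB by auto
        moreover have "\<forall>j\<in>T. (if j = i then 1 else 0) = (0::real) * real_of_int (g j)"
          using 2 by (auto simp: T_def K_def)
        ultimately show ?thesis unfolding H_def by blast
      qed
    qed
    show "span (insert e (c ` K)) \<subseteq> H" by (rule span_minimal[OF gen sub])
  next
    show "H \<subseteq> span (insert e (c ` K))"
    proof
      fix u assume "u \<in> H"
      then obtain x t where u: "u = lin x" "\<forall>j\<in>T. x j = t * of_int (g j)" unfolding H_def by blast
      have "(\<Sum>j\<in>K. (x j - t * of_int (g j)) *\<^sub>R c j) - t *\<^sub>R e \<in> span (insert e (c ` K))"
        by (intro span_diff span_sum span_scale span_base) auto
      then show "u \<in> span (insert e (c ` K))" using decomp[OF u(2)] u(1) by simp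
    qed
  qed
  have hx_eq: "span (coroot ` ({- d} \<union> a ` {1..k})) = H" using Sx hxeq by simp
  have eK: "e \<notin> c ` K"
  proof
    assume "e \<in> c ` K"
    then obtain i where i: "i \<in> K" "e = c i" by blast
    then have "lin (\<lambda>j. - of_int (g j)) = lin (\<lambda>l. if l = i then 1 else 0)"
      using e_lin lin_delta KB by auto
    from uniq[OF this] have "- of_int (g n) = (if n = i then 1 else (0::real))"
      using nT TB by (meson subsetD)
    moreover have "n \<noteq> i" using i kn by (auto simp: K_def)
    moreover have "g n > 0" using g_pos kn by auto
    ultimately show False by simp
  qed
  have injK: "inj_on c K" using injc KB inj_on_subset by blast
  define QX where "QX = {lin (\<lambda>j. of_int (m j)) | m. \<exists>t::int. \<forall>j\<in>T. m j = t * g j}"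
  have Sfin: "finite (insert e (c ` K))" by (simp add: K_def)
  have Qxeq: "zspan (coroot ` ({- d} \<union> a ` {1..k})) = QX"
    unfolding Sx zspan_finite[OF Sfin]
  proof (intro equalityI subsetI)
    fix u assume "u \<in> {\<Sum>v\<in>insert e (c ` K). real_of_int (w v) *\<^sub>R v |w. True}"
    then obtain w where "u = (\<Sum>v\<in>insert e (c ` K). real_of_int (w v) *\<^sub>R v)" by blast
    also have "\<dots> = of_int (w e) *\<^sub>R e + (\<Sum>j\<in>K. of_int (w (c j)) *\<^sub>R c j)"
      using eK injK by (simp add: K_def sum.reindex)
    also have "(\<Sum>j\<in>K. of_int (w (c j)) *\<^sub>R c j) = lin (\<lambda>j. if j \<le> k then of_int (w (c j)) else 0)"
      unfolding lin_def
      by (rule sum.mono_neutral_cong_left) (use finB KB in \<open>auto simp: K_def B_def\<close>)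
    also have "of_int (w e) *\<^sub>R e = lin (\<lambda>j. of_int (w e) * (- of_int (g j)))"
      by (subst lin_mult) (simp add: e_lin)
    finally have u1: "u = lin (\<lambda>j. of_int (w e) * (- of_int (g j))) + lin (\<lambda>j. if j \<le> k then of_int (w (c j)) else 0)" .
    also have "\<dots> = lin (\<lambda>j. of_int (w e) * (- of_int (g j)) + (if j \<le> k then of_int (w (c j)) else 0))"
      by (rule lin_add[symmetric])
    also have "\<dots> = lin (\<lambda>j. of_int ((if j \<le> k then w (c j) else 0) + (- w e) * g j))"
      by (intro arg_cong[where f=lin] ext) simp
    finally have "u = lin (\<lambda>j. of_int ((if j \<le> k then w (c j) else 0) + (- w e) * g j))" .
    moreover have "\<forall>j\<in>T. (if j \<le> k then w (c j) else 0) + (- w e) * g j = (- w e) * g j"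
      by (auto simp: T_def)
    ultimately show "u \<in> QX" unfolding QX_def
      by (intro CollectI exI[of _ "\<lambda>j. (if j \<le> k then w (c j) else 0) + (- w e) * g j"] conjI exI[of _ "- w e"]) simp_all
  next
    fix u assume "u \<in> QX"
    then obtain m t where u: "u = lin (\<lambda>j. of_int (m j))" "\<forall>j\<in>T. m j = t * g j"
      unfolding QX_def by blast
    have tl: "\<forall>j\<in>T. real_of_int (m j) = of_int t * of_int (g j)" using u(2) by simp
    define w where "w v = (if v = e then - t else m (inv_into K c v) - t * g (inv_into K c v))" for v
    have "(\<Sum>v\<in>insert e (c ` K). real_of_int (w v) *\<^sub>R v)
        = of_int (w e) *\<^sub>R e + (\<Sum>j\<in>K. of_int (w (c j)) *\<^sub>R c j)"
      using eK injK by (simp add: K_def sum.reindex)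
    also have "\<dots> = (\<Sum>j\<in>K. (of_int (m j) - of_int t * of_int (g j)) *\<^sub>R c j) - of_int t *\<^sub>R e"
    proof -
      have "(\<Sum>j\<in>K. of_int (w (c j)) *\<^sub>R c j) = (\<Sum>j\<in>K. (of_int (m j) - of_int t * of_int (g j)) *\<^sub>R c j)"
      proof (intro sum.cong refl)
        fix j assume j: "j \<in> K"
        then have "c j \<noteq> e" using eK by blast
        then show "of_int (w (c j)) *\<^sub>R c j = (of_int (m j) - of_int t * of_int (g j)) *\<^sub>R c j"
          using j injK by (simp add: w_def)
      qed
      then show ?thesis by (simp add: w_def)
    qed
    also have "\<dots> = u" using decomp[OF tl] u(1) by simp
    finally show "u \<in> {\<Sum>v\<in>insert e (c ` K). real_of_int (w v) *\<^sub>R v |w. True}"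
      by (intro CollectI exI[of _ w]) simp
  qed
  define QH where "QH = {lin (\<lambda>j. of_int (m j)) | m. \<exists>t::real. \<forall>j\<in>T. of_int (m j) = t * of_int (g j)}"
  have QHeq: "zspan (coroot ` a ` {1..n}) \<inter> span (coroot ` ({- d} \<union> a ` {1..k})) = QH"
    unfolding Qeq hx_eq
  proof (intro equalityI subsetI)
    fix u assume "u \<in> {lin (\<lambda>j. of_int (m j)) | m. True} \<inter> H"
    then obtain m x t where u: "u = lin (\<lambda>j. of_int (m j))" "u = lin x" "\<forall>j\<in>T. x j = t * of_int (g j)"
      unfolding H_def by blast
    from u(1)[symmetric] u(2) have eq: "lin (\<lambda>j. of_int (m j)) = lin x" by (rule trans)
    from uniq[OF eq] have "\<forall>j\<in>B. of_int (m j) = x j" .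
    then have tl: "\<forall>j\<in>T. of_int (m j) = t * of_int (g j)" using u(3) TB by auto
    show "u \<in> QH" unfolding QH_def
      by (rule CollectI, rule exI[of _ m], rule conjI[OF u(1)], rule exI[of _ t], rule tl)
  next
    fix u assume "u \<in> QH"
    then obtain m and t :: real where u: "u = lin (\<lambda>j. of_int (m j))" "\<forall>j\<in>T. of_int (m j) = t * of_int (g j)"
      unfolding QH_def by blast
    have "u \<in> {lin (\<lambda>j. of_int (m j)) | m. True}"
      by (rule CollectI, rule exI[of _ m]) (simp add: u(1))
    moreover have "u \<in> H" unfolding H_def
      by (rule CollectI, rule exI[of _ "\<lambda>j. of_int (m j)"], rule conjI[OF u(1)], rule exI[of _ t], rule u(2))
    ultimately show "u \<in> {lin (\<lambda>j. of_int (m j)) | m. True} \<inter> H" by blast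
  qed
  have QXQH: "QX \<subseteq> QH" unfolding QX_def QH_def
  proof (intro subsetI)
    fix u assume "u \<in> {lin (\<lambda>j. of_int (m j)) | m. \<exists>t::int. \<forall>j\<in>T. m j = t * g j}"
    then obtain m t where "u = lin (\<lambda>j. of_int (m j))" "\<forall>j\<in>T. m j = t * g j" by blast
    then have "u = lin (\<lambda>j. of_int (m j)) \<and> (\<forall>j\<in>T. of_int (m j) = (of_int t :: real) * of_int (g j))"
      by simp
    then show "u \<in> {lin (\<lambda>j. of_int (m j)) | m. \<exists>t::real. \<forall>j\<in>T. of_int (m j) = t * of_int (g j)}"
      by (intro CollectI exI[of _ m] conjI exI[of _ "of_int t"]) simp_all
  qed
  define N where "N = Gcd (g ` T)"
  have gn: "g n > 0" using g_pos kn by auto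
  have Npos: "N > 0"
  proof -
    have "N \<ge> 0" by (simp add: N_def)
    moreover have "N \<noteq> 0" using gn nT by (auto simp: N_def)
    ultimately show ?thesis by simp
  qed
  have Ndvd: "N dvd g j" if "j \<in> T" for j using that by (simp add: N_def Gcd_dvd)
  define tau where "tau u = (SOME x. u = lin x) n / of_int (g n)" for u
  have tau: "tau (lin x) = t" if "\<forall>j\<in>T. x j = t * of_int (g j)" for x t
  proof -
    have "lin x = lin (SOME y. lin x = lin y)" by (rule someI[of "\<lambda>y. lin x = lin y" x]) simp
    from uniq[OF this] have "(SOME y. lin x = lin y) n = x n" using nT TB by auto
    then show ?thesis using that nT gn by (simp add: tau_def)
  qed
  define f where "f u = \<lfloor>tau u * of_int N\<rfloor> mod N" for u
  have QH_int: "\<exists>z. tau u * of_int N = of_int z \<and> f u = z mod N \<and>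
      (\<exists>m t. u = lin (\<lambda>j. of_int (m j)) \<and> (\<forall>j\<in>T. of_int (m j) = t * of_int (g j)) \<and> tau u = t)"
    if "u \<in> QH" for u
  proof -
    from that obtain m and t :: real where u: "u = lin (\<lambda>j. of_int (m j))" "\<forall>j\<in>T. of_int (m j) = t * of_int (g j)"
      unfolding QH_def by blast
    have tu: "tau u = t" using tau[OF u(2)] u(1) by simp
    have "t * of_int N \<in> \<int>" unfolding N_def
      by (rule gcd_int_mult) (simp add: T_def, metis Ints_of_int u(2))
    then obtain z where z: "t * of_int N = of_int z" by (auto elim: Ints_cases)
    show ?thesis using z tu u by (intro exI[of _ z]) (auto simp: f_def)
  qed
  have hom: "f (u + v) = (f u + f v) mod N" if uQ: "u \<in> QH" and vQ: "v \<in> QH" for u v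
  proof -
    obtain z1 m1 t1 where 1: "tau u * of_int N = of_int z1" "f u = z1 mod N" "u = lin (\<lambda>j. of_int (m1 j))"
      "\<forall>j\<in>T. of_int (m1 j) = t1 * of_int (g j)" "tau u = t1" using QH_int[OF uQ] by blast
    obtain z2 m2 t2 where 2: "tau v * of_int N = of_int z2" "f v = z2 mod N" "v = lin (\<lambda>j. of_int (m2 j))"
      "\<forall>j\<in>T. of_int (m2 j) = t2 * of_int (g j)" "tau v = t2" using QH_int[OF vQ] by blast
    have "u + v = lin (\<lambda>j. of_int (m1 j) + of_int (m2 j))" using 1 2 lin_add by simp
    moreover have "\<forall>j\<in>T. of_int (m1 j) + of_int (m2 j) = (t1 + t2) * of_int (g j)"
      using 1 2 by (simp add: algebra_simps)
    ultimately have "tau (u + v) = t1 + t2" using tau by simp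
    then have "tau (u + v) * of_int N = of_int (z1 + z2)" using 1 2 by (simp add: algebra_simps)
    then have "f (u + v) = (z1 + z2) mod N" by (simp add: f_def)
    then show ?thesis using 1 2 by (simp add: mod_add_eq)
  qed
  have range: "f u \<in> {0..<N}" for u using Npos by (simp add: f_def)
  have surj: "f ` QH = {0..<N}"
  proof
    show "f ` QH \<subseteq> {0..<N}" using range by blast
  next
    show "{0..<N} \<subseteq> f ` QH"
    proof
      fix i assume i: "i \<in> {0..<N}"
      define m where "m j = (if j \<le> k then 0 else i * (g j div N))" for j
      have tl: "\<forall>j\<in>T. of_int (m j) = (of_int i / of_int N :: real) * of_int (g j)"
      proof
        fix j assume j: "j \<in> T"
        then obtain q where q: "g j = N * q" using Ndvd by blast
        show "of_int (m j) = (of_int i / of_int N :: real) * of_int (g j)"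
          using j Npos by (simp add: m_def q T_def)
      qed
      then have "lin (\<lambda>j. of_int (m j)) \<in> QH" unfolding QH_def by blast
      moreover have "f (lin (\<lambda>j. of_int (m j))) = i"
        using tau[OF tl] Npos i by (simp add: f_def)
      ultimately show "i \<in> f ` QH" by force
    qed
  qed
  have ker: "{u \<in> QH. f u = 0} = QX"
  proof (intro equalityI subsetI)
    fix u assume "u \<in> {u \<in> QH. f u = 0}"
    then have uQ: "u \<in> QH" "f u = 0" by auto
    obtain z m t where z: "tau u * of_int N = of_int z" "f u = z mod N" "u = lin (\<lambda>j. of_int (m j))"
      "\<forall>j\<in>T. of_int (m j) = t * of_int (g j)" "tau u = t" using QH_int[OF uQ(1)] by blast
    have "N dvd z" using z(2) uQ(2) by auto
    then obtain s where s: "z = N * s" by blast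
    have "t = of_int s" using z(1) z(5) s Npos by simp
    then have "\<forall>j\<in>T. m j = s * g j" using z(4)
      by (metis of_int_eq_iff of_int_mult)
    then show "u \<in> QX" unfolding QX_def using z(3) by blast
  next
    fix u assume "u \<in> QX"
    then obtain m t where u: "u = lin (\<lambda>j. of_int (m j))" "\<forall>j\<in>T. m j = t * g j"
      unfolding QX_def by blast
    have "\<forall>j\<in>T. of_int (m j) = (of_int t :: real) * of_int (g j)" using u(2) by simp
    from tau[OF this] u(1) have "tau u = of_int t" by simp
    then have "tau u * of_int N = of_int (t * N)" by simp
    then have "f u = 0" by (simp only: f_def floor_of_int) simp
    moreover have "u \<in> QH" using \<open>u \<in> QX\<close> QXQH by blast
    ultimately show "u \<in> {u \<in> QH. f u = 0}" by blast
  qed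
  show ?thesis
    unfolding Let_def QHeq Qxeq N_def[symmetric] T_def[symmetric]
    using QXQH hom range surj ker by (intro conjI exI[of _ f]) auto
qed

end
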